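(* Let $G$ be a connected graph with $n\ge 2$ nodes and diameter $D$, with nonnegative real loads, and run Algorithm 1 (described in the context). If the discrepancy of $G$ at the beginning of some round is $K$, then after that round the potential $p(G)$ has decreased by at least $K^2/(2D)$.
   Context: $G=(V,E)$ is an undirected connected graph, $n=|V|$, $D$ its diameter; each node $u$ holds a load $load(u)\ge 0$ (real). $L_{max},L_{min}$ denote the current maximum and minimum load, the discrepancy is $K=L_{max}-L_{min}$, $L_{avg}$ the average load (invariant under transfers), and the potential is $p(G)=\sum_{u\in V}(load(u)-L_{avg})^2$. Algorithm 1 (single proposal, continuous) proceeds in synchronous rounds; in each round, using the loads at the start of the round: (1) every node $u$ having at least one neighbor with strictly smaller load picks a neighbor $v$ maximizing $load(u)-load(v)$ (ties broken arbitrarily) and sends $v$ a proposal of value $p_{uv}=(load(u)-load(v))/2$; (2) every node that received at least one proposal accepts exactly one proposal of maximum value (ties arbitrary); (3) all accepted transfers are executed simultaneously (each accepted proposal $p_{wu}$ moves $p_{wu}$ from $w$ to $u$), and nodes report their new loads to neighbors. Thus each node gives load in at most one transfer and receives in at most one transfer per round. *)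

theory Defs
  imports Complex_Main
begin

definition graph :: "'a set \<Rightarrow> ('a \<Rightarrow> 'a \<Rightarrow> bool) \<Rightarrow> bool" where
  "graph V E \<longleftrightarrow> finite V \<and> (\<forall>u v. E u v \<longrightarrow> u \<in> V \<and> v \<in> V)
     \<and> (\<forall>u v. E u v \<longrightarrow> E v u) \<and> (\<forall>u. \<not> E u u)"

definition walk_len :: "('a \<Rightarrow> 'a \<Rightarrow> bool) \<Rightarrow> nat \<Rightarrow> 'a \<Rightarrow> 'a \<Rightarrow> bool" where
  "walk_len E k u v \<longleftrightarrow> (u, v) \<in> {(x, y). E x y} ^^ k"

definition connected_graph :: "'a set \<Rightarrow> ('a \<Rightarrow> 'a \<Rightarrow> bool) \<Rightarrow> bool" where
  "connected_graph V E \<longleftrightarrow> (\<forall>u\<in>V. \<forall>v\<in>V. \<exists>k. walk_len E k u v)"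

definition gdist :: "('a \<Rightarrow> 'a \<Rightarrow> bool) \<Rightarrow> 'a \<Rightarrow> 'a \<Rightarrow> nat" where
  "gdist E u v = (LEAST k. walk_len E k u v)"

definition diameter :: "'a set \<Rightarrow> ('a \<Rightarrow> 'a \<Rightarrow> bool) \<Rightarrow> nat" where
  "diameter V E = Max {gdist E u v | u v. u \<in> V \<and> v \<in> V}"

definition avg_load :: "'a set \<Rightarrow> ('a \<Rightarrow> real) \<Rightarrow> real" where
  "avg_load V load = (\<Sum>u\<in>V. load u) / real (card V)"

definition potential :: "'a set \<Rightarrow> ('a \<Rightarrow> real) \<Rightarrow> real" where
  "potential V load = (\<Sum>u\<in>V. (load u - avg_load V load)^2)"

definition discrepancy :: "'a set \<Rightarrow> ('a \<Rightarrow> real) \<Rightarrow> real" where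
  "discrepancy V load = Max (load ` V) - Min (load ` V)"

definition valid_proposals ::
  "'a set \<Rightarrow> ('a \<Rightarrow> 'a \<Rightarrow> bool) \<Rightarrow> ('a \<Rightarrow> real) \<Rightarrow> ('a \<Rightarrow> 'a option) \<Rightarrow> bool" where
  "valid_proposals V E load prop \<longleftrightarrow>
     (\<forall>u\<in>V.
        (if (\<exists>v. E u v \<and> load v < load u)
         then (\<exists>v. prop u = Some v \<and> E u v \<and>
                   (\<forall>w. E u w \<longrightarrow> load u - load w \<le> load u - load v))
         else prop u = None))"

text \<open>Step (2): each node that received at least one proposal accepts exactly one
  of maximum value (ties arbitrary); acc u = Some w means u accepts w's proposal.\<close>
definition valid_acceptance ::
  "'a set \<Rightarrow> ('a \<Rightarrow> real) \<Rightarrow> ('a \<Rightarrow> 'a option) \<Rightarrow> ('a \<Rightarrow> 'a option) \<Rightarrow> bool" where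
  "valid_acceptance V load prop acc \<longleftrightarrow>
     (\<forall>u\<in>V.
        (if (\<exists>w\<in>V. prop w = Some u)
         then (\<exists>w\<in>V. acc u = Some w \<and> prop w = Some u \<and>
                 (\<forall>w'\<in>V. prop w' = Some u \<longrightarrow>
                     (load w' - load u) / 2 \<le> (load w - load u) / 2))
         else acc u = None))"

definition execute_round ::
  "'a set \<Rightarrow> ('a \<Rightarrow> real) \<Rightarrow> ('a \<Rightarrow> 'a option) \<Rightarrow> 'a \<Rightarrow> real" where
  "execute_round V load acc u =
     load u
     + (\<Sum>w\<in>V. if acc u = Some w then (load w - load u) / 2 else 0)
     - (\<Sum>v\<in>V. if acc v = Some u then (load u - load v) / 2 else 0)"

definition alg1_round ::
  "'a set \<Rightarrow> ('a \<Rightarrow> 'a \<Rightarrow> bool) \<Rightarrow> ('a \<Rightarrow> real) \<Rightarrow> ('a \<Rightarrow> real) \<Rightarrow> bool" where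
  "alg1_round V E load load' \<longleftrightarrow>
     (\<exists>prop acc. valid_proposals V E load prop \<and> valid_acceptance V load prop acc \<and>
        (\<forall>u\<in>V. load' u = execute_round V load acc u))"

end

theory Submission imports Defs begin

lemma cs_sum:
  fixes a :: "'b \<Rightarrow> real"
  assumes "finite R"
  shows "(\<Sum>i\<in>R. a i)^2 \<le> real (card R) * (\<Sum>i\<in>R. (a i)^2)"
proof -
  have "0 \<le> (\<Sum>i\<in>R. \<Sum>j\<in>R. (a i - a j)^2)"
    by (intro sum_nonneg) auto
  also have "(\<Sum>i\<in>R. \<Sum>j\<in>R. (a i - a j)^2)
      = (\<Sum>i\<in>R. \<Sum>j\<in>R. (a i)^2 + (a j)^2 - 2 * (a i * a j))"
    by (intro sum.cong refl) (simp add: power2_diff)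
  also have "\<dots> = 2 * (real (card R) * (\<Sum>i\<in>R. (a i)^2)) - 2 * (\<Sum>i\<in>R. a i)^2"
    by (simp add: sum.distrib sum_subtractf sum_distrib_left sum_distrib_right power2_eq_square
                  algebra_simps)
  finally show ?thesis by simp
qed

lemma sq_single:
  fixes g :: "'b \<Rightarrow> real"
  assumes "finite V" and "\<forall>x\<in>V. \<forall>y\<in>V. P x \<longrightarrow> P y \<longrightarrow> x = y"
  shows "(\<Sum>v\<in>V. if P v then g v else 0)^2 = (\<Sum>v\<in>V. if P v then (g v)^2 else 0)"
proof (cases "\<exists>v\<in>V. P v")
  case True
  then obtain v0 where v0: "v0 \<in> V" "P v0" by blast
  have eq: "\<And>v. v \<in> V \<Longrightarrow> P v \<longleftrightarrow> v = v0" using assms(2) v0 by blast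
  have "(\<Sum>v\<in>V. if P v then g v else 0) = (\<Sum>v\<in>V. if v = v0 then g v else 0)"
    by (intro sum.cong refl) (simp add: eq)
  moreover have "(\<Sum>v\<in>V. if P v then (g v)^2 else 0) = (\<Sum>v\<in>V. if v = v0 then (g v)^2 else 0)"
    by (intro sum.cong refl) (simp add: eq)
  ultimately show ?thesis using v0 assms(1) by simp
next
  case False
  then show ?thesis by (simp add: sum.neutral)
qed

lemma pot_sum:
  assumes "finite V" "V \<noteq> {}"
  shows "potential V x = (\<Sum>u\<in>V. (x u)^2) - (\<Sum>u\<in>V. x u)^2 / real (card V)"
proof -
  have c: "real (card V) > 0" using assms by (simp add: card_gt_0_iff)
  have "potential V x = (\<Sum>u\<in>V. (x u)^2 - 2 * avg_load V x * x u + (avg_load V x)^2)"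
    unfolding potential_def by (intro sum.cong refl) (simp add: power2_diff)
  also have "\<dots> = (\<Sum>u\<in>V. (x u)^2) - 2 * avg_load V x * (\<Sum>u\<in>V. x u) + real (card V) * (avg_load V x)^2"
    by (simp add: sum.distrib sum_subtractf sum_distrib_left)
  also have "\<dots> = (\<Sum>u\<in>V. (x u)^2) - (\<Sum>u\<in>V. x u)^2 / real (card V)"
    using c unfolding avg_load_def by (simp add: field_simps power2_eq_square)
  finally show ?thesis .
qed


lemma pot_core:
  fixes x y :: "'a \<Rightarrow> real" and acc :: "'a \<Rightarrow> 'a option"
  assumes fin: "finite V" and ne: "V \<noteq> {}"
    and A1: "\<forall>u\<in>V. \<forall>w. acc u = Some w \<longrightarrow> w \<in> V \<and> x u \<le> x w"
    and A2: "\<forall>u\<in>V. \<forall>v1\<in>V. \<forall>v2\<in>V. acc v1 = Some u \<longrightarrow> acc v2 = Some u \<longrightarrow> v1 = v2"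
    and Y: "\<forall>u\<in>V. y u = execute_round V x acc u"
  shows "potential V x - potential V y \<ge>
           2 * (\<Sum>u\<in>V. (\<Sum>w\<in>V. if acc u = Some w then (x w - x u) / 2 else 0)^2)"
proof -
  define din where "din u = (\<Sum>w\<in>V. if acc u = Some w then (x w - x u) / 2 else 0)" for u
  define dout where "dout u = (\<Sum>v\<in>V. if acc v = Some u then (x u - x v) / 2 else 0)" for u
  have Yd: "\<And>u. u \<in> V \<Longrightarrow> y u = x u + din u - dout u"
    using Y unfolding execute_round_def din_def dout_def by simp
  have din_nn: "\<And>u. u \<in> V \<Longrightarrow> din u \<ge> 0"
    unfolding din_def using A1 by (intro sum_nonneg) auto
  have dout_nn: "\<And>u. u \<in> V \<Longrightarrow> dout u \<ge> 0"
    unfolding dout_def using A1 by (intro sum_nonneg) auto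
  have sd: "sum din V = sum dout V"
    unfolding din_def dout_def by (rule sum.swap)
  have sy: "(\<Sum>u\<in>V. y u) = (\<Sum>u\<in>V. x u)"
  proof -
    have "(\<Sum>u\<in>V. y u) = (\<Sum>u\<in>V. x u + din u - dout u)" by (intro sum.cong refl) (simp add: Yd)
    also have "\<dots> = (\<Sum>u\<in>V. x u)" using sd by (simp add: sum.distrib sum_subtractf)
    finally show ?thesis .
  qed
  have din_sq: "\<And>v. (din v)^2 = (\<Sum>u\<in>V. if acc v = Some u then ((x u - x v)/2)^2 else 0)"
    unfolding din_def by (rule sq_single[OF fin]) auto
  have dout_sq: "\<And>u. u \<in> V \<Longrightarrow> (dout u)^2 = (\<Sum>v\<in>V. if acc v = Some u then ((x u - x v)/2)^2 else 0)"
    unfolding dout_def using A2 by (intro sq_single[OF fin]) auto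
  have sq_eq: "(\<Sum>u\<in>V. (dout u)^2) = (\<Sum>u\<in>V. (din u)^2)"
  proof -
    have "(\<Sum>u\<in>V. (dout u)^2) = (\<Sum>u\<in>V. \<Sum>v\<in>V. if acc v = Some u then ((x u - x v)/2)^2 else 0)"
      by (intro sum.cong refl) (simp add: dout_sq)
    also have "\<dots> = (\<Sum>v\<in>V. \<Sum>u\<in>V. if acc v = Some u then ((x u - x v)/2)^2 else 0)"
      by (rule sum.swap)
    also have "\<dots> = (\<Sum>u\<in>V. (din u)^2)" by (simp add: din_sq)
    finally show ?thesis .
  qed
  have xd: "(\<Sum>u\<in>V. x u * (dout u - din u)) = 2 * (\<Sum>u\<in>V. (din u)^2)"
  proof -
    have 1: "(\<Sum>u\<in>V. x u * dout u) = (\<Sum>v\<in>V. \<Sum>u\<in>V. if acc v = Some u then x u * (x u - x v) / 2 else 0)"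
    proof -
      have "(\<Sum>u\<in>V. x u * dout u) = (\<Sum>u\<in>V. \<Sum>v\<in>V. if acc v = Some u then x u * (x u - x v) / 2 else 0)"
        unfolding dout_def sum_distrib_left by (intro sum.cong refl) auto
      also have "\<dots> = (\<Sum>v\<in>V. \<Sum>u\<in>V. if acc v = Some u then x u * (x u - x v) / 2 else 0)"
        by (rule sum.swap)
      finally show ?thesis .
    qed
    have 2: "(\<Sum>v\<in>V. x v * din v) = (\<Sum>v\<in>V. \<Sum>u\<in>V. if acc v = Some u then x v * (x u - x v) / 2 else 0)"
      unfolding din_def sum_distrib_left by (intro sum.cong refl) auto
    have "(\<Sum>u\<in>V. x u * (dout u - din u)) = (\<Sum>u\<in>V. x u * dout u) - (\<Sum>v\<in>V. x v * din v)"
      by (simp add: right_diff_distrib sum_subtractf)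
    also have "\<dots> = (\<Sum>v\<in>V. \<Sum>u\<in>V. (if acc v = Some u then x u * (x u - x v) / 2 else 0)
                     - (if acc v = Some u then x v * (x u - x v) / 2 else 0))"
      unfolding 1 2 by (simp add: sum_subtractf)
    also have "\<dots> = (\<Sum>v\<in>V. 2 * (\<Sum>u\<in>V. if acc v = Some u then ((x u - x v)/2)^2 else 0))"
      unfolding sum_distrib_left
      by (intro sum.cong refl) (auto simp: power2_eq_square field_simps)
    also have "\<dots> = 2 * (\<Sum>u\<in>V. (din u)^2)"
      by (simp add: din_sq sum_distrib_left)
    finally show ?thesis .
  qed
  have "potential V x - potential V y = (\<Sum>u\<in>V. (x u)^2) - (\<Sum>u\<in>V. (y u)^2)"
    using pot_sum[OF fin ne, of x] pot_sum[OF fin ne, of y] sy by simp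
  also have "\<dots> = (\<Sum>u\<in>V. 2 * (x u * (dout u - din u)) - (din u)^2 - (dout u)^2 + 2 * (din u * dout u))"
    unfolding sum_subtractf[symmetric]
    by (intro sum.cong refl) (simp add: Yd power2_eq_square algebra_simps)
  also have "\<dots> = 2 * (\<Sum>u\<in>V. x u * (dout u - din u)) - (\<Sum>u\<in>V. (din u)^2) - (\<Sum>u\<in>V. (dout u)^2)
                   + 2 * (\<Sum>u\<in>V. din u * dout u)"
    by (simp add: sum.distrib sum_subtractf sum_distrib_left)
  also have "\<dots> = 2 * (\<Sum>u\<in>V. (din u)^2) + 2 * (\<Sum>u\<in>V. din u * dout u)"
    using xd sq_eq by simp
  also have "\<dots> \<ge> 2 * (\<Sum>u\<in>V. (din u)^2)"
    using din_nn dout_nn by (simp add: sum_nonneg)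
  finally show ?thesis unfolding din_def .
qed


lemma walk_charge:
  fixes x a :: "'a \<Rightarrow> real" and pr :: "'a \<Rightarrow> 'a option" and f :: "nat \<Rightarrow> 'a"
  assumes fin: "finite V"
    and fV: "\<forall>i\<le>L. f i \<in> V" and fE: "\<forall>i<L. E (f i) (f (Suc i))"
    and H1: "\<forall>z\<in>V. pr z = None \<longrightarrow> (\<forall>y. E z y \<longrightarrow> x z \<le> x y)"
    and H2: "\<forall>z\<in>V. \<forall>w. pr z = Some w \<longrightarrow> w \<in> V \<and> (\<forall>y. E z y \<longrightarrow> x w \<le> x y) \<and> x z - x w \<le> a w"
    and a0: "\<forall>w\<in>V. a w \<ge> 0"
  shows "s \<le> L \<Longrightarrow> \<exists>R. R \<subseteq> V \<and> card R \<le> L - s \<and>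
            (\<forall>w\<in>R. \<exists>j. s \<le> j \<and> j < L \<and> pr (f j) = Some w) \<and> x (f s) - x (f L) \<le> sum a R"
proof (induction "L - s" arbitrary: s rule: less_induct)
  case less
  show ?case
  proof (cases "s = L")
    case True
    then show ?thesis by (intro exI[of _ "{}"]) auto
  next
    case False
    hence sL: "s < L" using less.prems by simp
    have fsV: "f s \<in> V" using fV sL by simp
    show ?thesis
    proof (cases "pr (f s)")
      case None
      have lt: "L - Suc s < L - s" using sL by simp
      obtain R where R: "R \<subseteq> V" "card R \<le> L - Suc s"
        "\<forall>w\<in>R. \<exists>j. Suc s \<le> j \<and> j < L \<and> pr (f j) = Some w" "x (f (Suc s)) - x (f L) \<le> sum a R"
        using less.hyps[OF lt] sL by auto
      have "x (f s) \<le> x (f (Suc s))" using H1 fsV None fE sL by blast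
      with R show ?thesis
        by (intro exI[of _ R]) (fastforce dest: Suc_leD)
    next
      case (Some w)
      define J where "J = {j. s \<le> j \<and> j < L \<and> pr (f j) = Some w}"
      have Jfin: "finite J" unfolding J_def by auto
      have sJ: "s \<in> J" unfolding J_def using sL Some by simp
      define m where "m = Max J"
      have mJ: "m \<in> J" unfolding m_def using Jfin sJ by (intro Max_in) auto
      have sm: "s \<le> m" unfolding m_def using Jfin sJ by simp
      have mL: "m < L" "pr (f m) = Some w" using mJ unfolding J_def by auto
      have notJ: "\<And>j. m < j \<Longrightarrow> j < L \<Longrightarrow> pr (f j) \<noteq> Some w"
      proof
        fix j assume "m < j" "j < L" "pr (f j) = Some w"
        hence "j \<in> J" using sm unfolding J_def by simp
        hence "j \<le> m" unfolding m_def using Jfin by simp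
        with \<open>m < j\<close> show False by simp
      qed
      have lt: "L - Suc m < L - s" using sm mL by simp
      obtain R where R: "R \<subseteq> V" "card R \<le> L - Suc m"
        "\<forall>w\<in>R. \<exists>j. Suc m \<le> j \<and> j < L \<and> pr (f j) = Some w" "x (f (Suc m)) - x (f L) \<le> sum a R"
        using less.hyps[OF lt] mL by auto
      have wR: "w \<notin> R" using R(3) notJ by fastforce
      have fmV: "f m \<in> V" using fV mL by simp
      have wV: "w \<in> V" and w1: "x w \<le> x (f (Suc m))" using H2 fmV mL fE by blast+
      have w2: "x (f s) - x w \<le> a w" using H2 fsV Some by blast
      have finR: "finite R" using R(1) fin finite_subset by blast
      show ?thesis
      proof (intro exI[of _ "insert w R"] conjI)
        show "insert w R \<subseteq> V" using R wV by simp
        show "card (insert w R) \<le> L - s" using R(2) finR wR mL sm by simp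
        show "\<forall>w'\<in>insert w R. \<exists>j. s \<le> j \<and> j < L \<and> pr (f j) = Some w'"
        proof
          fix w' assume "w' \<in> insert w R"
          then show "\<exists>j. s \<le> j \<and> j < L \<and> pr (f j) = Some w'"
          proof
            assume "w' = w" then show ?thesis using sL Some by blast
          next
            assume "w' \<in> R"
            then obtain j where "Suc m \<le> j" "j < L" "pr (f j) = Some w'" using R(3) by blast
            then show ?thesis using sm by (intro exI[of _ j]) simp
          qed
        qed
        show "x (f s) - x (f L) \<le> sum a (insert w R)"
          using R(4) w1 w2 finR wR by simp
      qed
    qed
  qed
qed


theorem lemma2:
  fixes V :: "'a set" and E :: "'a \<Rightarrow> 'a \<Rightarrow> bool" and load load' :: "'a \<Rightarrow> real"
  assumes "graph V E"
    and "connected_graph V E"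
    and "card V \<ge> 2"
    and "\<forall>u\<in>V. load u \<ge> 0"
    and "alg1_round V E load load'"
  shows "potential V load - potential V load'
           \<ge> (discrepancy V load)^2 / (2 * real (diameter V E))"
proof -
  have fin: "finite V" and EV: "\<And>u v. E u v \<Longrightarrow> u \<in> V \<and> v \<in> V"
    using assms(1) unfolding graph_def by auto
  have ne: "V \<noteq> {}" using assms(3) by auto
  obtain pr acc where vp: "valid_proposals V E load pr" and va: "valid_acceptance V load pr acc"
    and ex: "\<forall>u\<in>V. load' u = execute_round V load acc u"
    using assms(5) unfolding alg1_round_def by blast
  have P2: "E z w \<and> load w < load z \<and> (\<forall>y. E z y \<longrightarrow> load w \<le> load y)"
    if zV: "z \<in> V" and zw: "pr z = Some w" for z w
  proof -
    have c: "\<exists>v. E z v \<and> load v < load z"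
    proof (rule ccontr)
      assume "\<not> ?thesis"
      then have "pr z = None" using vp zV unfolding valid_proposals_def by auto
      with zw show False by simp
    qed
    then obtain v where v: "pr z = Some v" "E z v" "\<forall>y. E z y \<longrightarrow> load z - load y \<le> load z - load v"
    proof -
      have "if (\<exists>v. E z v \<and> load v < load z)
         then (\<exists>v. pr z = Some v \<and> E z v \<and>
                   (\<forall>w. E z w \<longrightarrow> load z - load w \<le> load z - load v))
         else pr z = None" using vp zV unfolding valid_proposals_def by blast
      with c have "\<exists>v. pr z = Some v \<and> E z v \<and>
                   (\<forall>w. E z w \<longrightarrow> load z - load w \<le> load z - load v)" by simp
      then show ?thesis using that by blast
    qed
    have "v = w" using v(1) zw by simp
    with v c show ?thesis by force
  qed
  have H1: "\<forall>z\<in>V. pr z = None \<longrightarrow> (\<forall>y. E z y \<longrightarrow> load z \<le> load y)"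
  proof (intro ballI impI allI)
    fix z y assume z: "z \<in> V" "pr z = None" "E z y"
    have "\<not> (\<exists>v. E z v \<and> load v < load z)"
    proof
      assume "\<exists>v. E z v \<and> load v < load z"
      then have "\<exists>v. pr z = Some v" using vp z(1) unfolding valid_proposals_def by (metis (full_types))
      with z(2) show False by simp
    qed
    with z(3) show "load z \<le> load y" by (simp add: not_less)
  qed
  have va_inst: "if (\<exists>w\<in>V. pr w = Some u)
         then (\<exists>w\<in>V. acc u = Some w \<and> pr w = Some u \<and>
                 (\<forall>w'\<in>V. pr w' = Some u \<longrightarrow>
                     (load w' - load u) / 2 \<le> (load w - load u) / 2))
         else acc u = None" if "u \<in> V" for u
    using va that unfolding valid_acceptance_def by blast
  have A1': "w \<in> V \<and> pr w = Some u" if uV: "u \<in> V" and uw: "acc u = Some w" for u w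
  proof (cases "\<exists>w\<in>V. pr w = Some u")
    case True
    then obtain w' where "w' \<in> V" "acc u = Some w'" "pr w' = Some u"
      using va_inst[OF uV] True by auto
    with uw show ?thesis by simp
  next
    case False
    then have "acc u = None" using va_inst[OF uV] by auto
    with uw show ?thesis by simp
  qed
  have A1: "\<forall>u\<in>V. \<forall>w. acc u = Some w \<longrightarrow> w \<in> V \<and> load u \<le> load w"
    using A1' P2 by (meson less_imp_le)
  have A2: "\<forall>u\<in>V. \<forall>v1\<in>V. \<forall>v2\<in>V. acc v1 = Some u \<longrightarrow> acc v2 = Some u \<longrightarrow> v1 = v2"
    using A1' by (metis option.inject)
  define din where "din u = (\<Sum>w\<in>V. if acc u = Some w then (load w - load u) / 2 else 0)" for u
  have pot: "potential V load - potential V load' \<ge> 2 * (\<Sum>u\<in>V. (din u)^2)"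
    unfolding din_def by (rule pot_core[OF fin ne A1 A2 ex])
  have din_nn: "\<And>u. u \<in> V \<Longrightarrow> din u \<ge> 0"
    unfolding din_def using A1 by (intro sum_nonneg) auto
  define a where "a u = 2 * din u" for u
  have a0: "\<forall>w\<in>V. a w \<ge> 0" using din_nn unfolding a_def by simp
  have H2: "\<forall>z\<in>V. \<forall>w. pr z = Some w \<longrightarrow> w \<in> V \<and> (\<forall>y. E z y \<longrightarrow> load w \<le> load y) \<and> load z - load w \<le> a w"
  proof (intro ballI allI impI)
    fix z w assume z: "z \<in> V" "pr z = Some w"
    from P2[OF z] have Ezw: "E z w" and mn: "\<forall>y. E z y \<longrightarrow> load w \<le> load y" by auto
    have wV: "w \<in> V" using EV Ezw by blast
    obtain w0 where w0: "w0 \<in> V" "acc w = Some w0"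
      "\<forall>w'\<in>V. pr w' = Some w \<longrightarrow> load w' \<le> load w0"
      using va_inst[OF wV] z by (auto split: if_splits)
    have "din w = (\<Sum>u\<in>V. if u = w0 then (load u - load w) / 2 else 0)"
      unfolding din_def using w0(2) by (intro sum.cong refl) auto
    also have "\<dots> = (load w0 - load w) / 2" using w0(1) fin by simp
    finally have "a w = load w0 - load w" unfolding a_def by simp
    with w0(3) z have "load z - load w \<le> a w" by auto
    with wV mn show "w \<in> V \<and> (\<forall>y. E z y \<longrightarrow> load w \<le> load y) \<and> load z - load w \<le> a w" by blast
  qed
  obtain umax where umax: "umax \<in> V" "load umax = Max (load ` V)"
    using fin ne by (metis (mono_tags, lifting) Max_in finite_imageI image_iff image_is_empty)
  obtain umin where umin: "umin \<in> V" "load umin = Min (load ` V)"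
    using fin ne by (metis (mono_tags, lifting) Min_in finite_imageI image_iff image_is_empty)
  have Kdef: "discrepancy V load = load umax - load umin"
    unfolding discrepancy_def using umax umin by simp
  have K0: "discrepancy V load \<ge> 0"
  proof -
    have "Min (load ` V) \<le> load umax" using fin umax(1) by (intro Min_le) auto
    then show ?thesis using Kdef umin by simp
  qed
  define L where "L = gdist E umax umin"
  have "\<exists>k. walk_len E k umax umin" using assms(2) umax umin unfolding connected_graph_def by blast
  then have wl: "walk_len E L umax umin" unfolding L_def gdist_def by (rule LeastI_ex)
  have LD: "L \<le> diameter V E"
    unfolding diameter_def L_def
  proof (rule Max_ge)
    have "{gdist E u v |u v. u \<in> V \<and> v \<in> V} = (\<lambda>(u,v). gdist E u v) ` (V \<times> V)" by auto
    then show "finite {gdist E u v |u v. u \<in> V \<and> v \<in> V}" using fin by simp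
    show "gdist E umax umin \<in> {gdist E u v |u v. u \<in> V \<and> v \<in> V}" using umax umin by blast
  qed
  obtain f where f: "f 0 = umax" "f L = umin" "\<forall>i<L. (f i, f (Suc i)) \<in> {(x, y). E x y}"
    using wl unfolding walk_len_def relpow_fun_conv by blast
  have fE: "\<forall>i<L. E (f i) (f (Suc i))" using f(3) by auto
  have fV: "\<forall>i\<le>L. f i \<in> V"
  proof (intro allI impI)
    fix i assume "i \<le> L"
    then show "f i \<in> V"
    proof (cases "i = L")
      case True then show ?thesis using f(2) umin by simp
    next
      case False then show ?thesis using fE EV \<open>i \<le> L\<close> by (meson le_neq_implies_less)
    qed
  qed
  obtain R where R: "R \<subseteq> V" "card R \<le> L - 0" "load (f 0) - load (f L) \<le> sum a R"
    using walk_charge[OF fin fV fE H1 H2 a0, of 0] by auto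
  have finR: "finite R" using R(1) fin finite_subset by blast
  have KR: "discrepancy V load \<le> sum a R" using R(3) f Kdef by simp
  have "(discrepancy V load)^2 \<le> (sum a R)^2" using KR K0 by (intro power_mono) auto
  also have "\<dots> \<le> real (card R) * (\<Sum>i\<in>R. (a i)^2)" by (rule cs_sum[OF finR])
  also have "\<dots> \<le> real (diameter V E) * (\<Sum>i\<in>V. (a i)^2)"
  proof (rule mult_mono)
    show "real (card R) \<le> real (diameter V E)" using R(2) LD by simp
    show "(\<Sum>i\<in>R. (a i)^2) \<le> (\<Sum>i\<in>V. (a i)^2)" using R(1) fin by (intro sum_mono2) auto
  qed (auto intro: sum_nonneg)
  finally have main: "(discrepancy V load)^2 \<le> real (diameter V E) * (4 * (\<Sum>i\<in>V. (din i)^2))"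
    unfolding a_def by (simp add: power_mult_distrib sum_distrib_left)
  show ?thesis
  proof (cases "diameter V E = 0")
    case True
    have "0 \<le> 2 * (\<Sum>u\<in>V. (din u)^2)" by (simp add: sum_nonneg)
    then show ?thesis using pot True by simp
  next
    case False
    then have Dp: "real (diameter V E) > 0" by simp
    have "(discrepancy V load)^2 / (2 * real (diameter V E)) \<le> 2 * (\<Sum>i\<in>V. (din i)^2)"
      using main Dp by (simp add: divide_le_eq algebra_simps)
    with pot show ?thesis by linarith
  qed
qed

end
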